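(* For every positive integer $m$ the following identity of formal power series in $\mathbb{Z}[[q]]$ holds: \[ \sum_{i=0}^\infty q^{-2i}q^{m(i^2+2i)}\frac{(1-q^{i+1})^3(1+q^{i+1})}{1-q} =(q)_{\infty}\sum_{0\leq k_m\leq\dots\leq k_2\leq k_1}\frac{q^{-2k_m}\,q^{\sum_{j=1}^m(k_j^2+2k_j)}}{(q)_{k_m}^2\,(q)_{k_1-k_2}(q)_{k_2-k_3}\cdots(q)_{k_{m-1}-k_m}}, \] where the sum on the right runs over all $m$-tuples of integers $(k_1,\dots,k_m)$ with $0\le k_m\le\dots\le k_1$ (for $m=1$ the product $(q)_{k_1-k_2}\cdots(q)_{k_{m-1}-k_m}$ is empty and equals $1$).
   Context: $(q)_k=(q;q)_k=\prod_{l=1}^{k}(1-q^l)$ for $k\ge 0$ (so $(q)_0=1$), and $(q)_\infty=\prod_{l=1}^\infty(1-q^l)$. Both sides are well-defined elements of $\mathbb{Z}[[q]]$ (the exponents $-2i+m(i^2+2i)$ and $-2k_m+\sum_j(k_j^2+2k_j)$ are nonnegative and tend to infinity). *)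

theory Defs
  imports "HOL-Analysis.Analysis" "HOL-Computational_Algebra.Formal_Power_Series"
begin

text \<open>Coefficients are taken in the rationals (Z[[q]] is a subring of Q[[q]]), so that
  division by series with constant term 1 is available.\<close>
definition qpoch :: "nat \<Rightarrow> rat fps" where
  "qpoch k = (\<Prod>l\<in>{1..k}. 1 - fps_X ^ l)"

text \<open>Left-hand summand: q^{-2i} q^{m(i^2+2i)} (1-q^{i+1})^3 (1+q^{i+1}) / (1-q).
  The exponent -2i + m(i^2+2i) is nonnegative for m \<ge> 1, written as a nat.\<close>
definition lhs_term :: "nat \<Rightarrow> nat \<Rightarrow> rat fps" where
  "lhs_term m i = fps_X ^ (m * (i^2 + 2*i) - 2*i)
      * ((1 - fps_X ^ (i+1))^3 * (1 + fps_X ^ (i+1)) / (1 - fps_X))"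

definition rhs_index :: "nat \<Rightarrow> nat list set" where
  "rhs_index m = {ks. length ks = m \<and> sorted_wrt (\<ge>) ks}"

definition rhs_term :: "nat list \<Rightarrow> rat fps" where
  "rhs_term ks = fps_X ^ ((\<Sum>j<length ks. (ks!j)^2 + 2*(ks!j)) - 2 * last ks)
      / ((qpoch (last ks))^2 * (\<Prod>j<length ks - 1. qpoch (ks!j - ks!(j+1))))"

end

theory Submission
  imports Defs
begin

abbreviation X :: "rat fps" where "X \<equiv> fps_X"

definition D :: "nat \<Rightarrow> rat fps" where "D k = inverse (qpoch k)"

lemma qpoch_0[simp]: "qpoch 0 = 1"
  by (simp add: qpoch_def)

lemma qpoch_Suc: "qpoch (Suc k) = qpoch k * (1 - X ^ Suc k)"
  by (simp add: qpoch_def prod.cl_ivl_Suc)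

lemma qpoch_nth0[simp]: "fps_nth (qpoch k) 0 = 1"
  by (induction k) (simp_all add: qpoch_Suc)

lemma qpoch_D: "qpoch k * D k = 1"
  unfolding D_def by (rule inverse_mult_eq_1') simp

lemma D_0[simp]: "D 0 = 1"
  by (simp add: D_def)

lemma D_Suc: "(1 - X ^ Suc k) * D (Suc k) = D k"
proof -
  have h: "fps_nth (1 - X ^ Suc k) 0 \<noteq> 0" by simp
  have e: "D (Suc k) = D k * inverse (1 - X ^ Suc k)"
    unfolding D_def qpoch_Suc by (rule fps_inverse_mult)
  have "(1 - X ^ Suc k) * D (Suc k) = D k * ((1 - X ^ Suc k) * inverse (1 - X ^ Suc k))"
    by (simp only: e mult.left_commute)
  then show ?thesis by (simp only: inverse_mult_eq_1'[OF h] mult_1_right)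
qed

lemma D_1: "(1 - X) * D 1 = 1"
  using D_Suc[of 0] by simp

lemma D_nth0[simp]: "fps_nth (D k) 0 = 1"
  by (simp add: D_def)

lemma D_nz[simp]: "D k \<noteq> 0"
  using qpoch_D[of k] by auto

definition T :: "nat \<Rightarrow> nat \<Rightarrow> nat \<Rightarrow> rat fps" where
  "T N t j = X ^ (j^2 + t*j) * D j * D (N - j) * D (t + j)"

lemma T_step:
  assumes "j \<le> Suc N"
  shows "(1 - X ^ Suc N) * T (Suc N) t j =
     (if j \<le> N then T N t j else 0) + (if j \<ge> 1 then X ^ (N + t + 1) * T N (t+1) (j - 1) else 0)"
proof (cases j)
  case 0
  have "(1 - X ^ Suc N) * T (Suc N) t j = D t * ((1 - X ^ Suc N) * D (Suc N))"
    using 0 by (simp add: T_def mult_ac del: power_Suc)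
  then show ?thesis using 0 D_Suc[of N] by (simp add: T_def mult_ac del: power_Suc)
next
  case (Suc i)
  show ?thesis
  proof (cases "j = Suc N")
    case True
    then have iN: "i = N" using Suc by simp
    have e: "X ^ (Suc N ^ 2 + t * Suc N) = X ^ (N + t + 1) * X ^ (N^2 + (t+1) * N)"
      by (simp add: power_add[symmetric] power2_eq_square algebra_simps)
    have "(1 - X ^ Suc N) * T (Suc N) t j
        = X ^ (Suc N ^ 2 + t * Suc N) * ((1 - X ^ Suc N) * D (Suc N)) * D (t + Suc N)"
      using True by (simp add: T_def algebra_simps)
    also have "\<dots> = X ^ (N + t + 1) * T N (t+1) N"
      unfolding D_Suc e T_def by (simp add: algebra_simps)
    finally show ?thesis using True iN Suc by simp
  next
    case False
    then have jN: "j \<le> N" "i < N" using assms Suc by auto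
    obtain a where a: "N - j = a" "N - i = Suc a" using jN Suc by (metis Suc_diff_Suc)
    have split: "(1 - X ^ Suc N) = (1 - X ^ Suc a) + X ^ Suc a * (1 - X ^ Suc i)"
    proof -
      have "Suc N = Suc a + Suc i" using a jN Suc by simp
      then show ?thesis by (simp add: power_add algebra_simps)
    qed
    have e: "X ^ Suc a * X ^ (j^2 + t*j) = X ^ (N + t + 1) * X ^ (i^2 + (t+1)*i)"
    proof -
      have "Suc a + (j^2 + t*j) = N + t + 1 + (i^2 + (t+1)*i)"
        using a jN Suc by (simp add: power2_eq_square algebra_simps)
      then show ?thesis by (simp add: power_add[symmetric])
    qed
    have "(1 - X ^ Suc N) * T (Suc N) t j
        = X ^ (j^2 + t*j) * D j * ((1 - X ^ Suc a) * D (Suc a)) * D (t + j)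
          + X ^ Suc a * X ^ (j^2 + t*j) * ((1 - X ^ Suc i) * D (Suc i)) * D (Suc a) * D (t + j)"
      unfolding split T_def using a Suc by (simp add: algebra_simps)
    also have "\<dots> = T N t j + X ^ (N + t + 1) * T N (t+1) i"
      unfolding D_Suc e T_def using a Suc by (simp add: algebra_simps)
    finally show ?thesis using jN Suc by simp
  qed
qed

lemma KI: "(\<Sum>j\<le>N. T N t j) = D N * D (N + t)"
proof (induction N arbitrary: t)
  case 0
  then show ?case by (simp add: T_def)
next
  case (Suc N)
  have "(1 - X ^ Suc N) * (\<Sum>j\<le>Suc N. T (Suc N) t j)
      = (\<Sum>j\<le>Suc N. (if j \<le> N then T N t j else 0) + (if j \<ge> 1 then X ^ (N + t + 1) * T N (t+1) (j - 1) else 0))"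
    unfolding sum_distrib_left by (intro sum.cong refl T_step) simp
  also have "\<dots> = (\<Sum>j\<le>N. T N t j) + X ^ (N + t + 1) * (\<Sum>j\<le>N. T N (t+1) j)"
  proof -
    have 1: "(\<Sum>j\<le>Suc N. (if j \<le> N then T N t j else 0)) = (\<Sum>j\<le>N. T N t j)"
      by (simp add: sum.atMost_Suc)
    have 2: "(\<Sum>j\<le>Suc N. (if j \<ge> 1 then X ^ (N + t + 1) * T N (t+1) (j - 1) else 0))
         = X ^ (N + t + 1) * (\<Sum>j\<le>N. T N (t+1) j)"
      by (simp only: sum.atMost_Suc_shift) (simp add: sum_distrib_left)
    show ?thesis by (simp only: sum.distrib 1 2)
  qed
  also have "\<dots> = D N * D (N + t) + X ^ (N + t + 1) * (D N * D (N + Suc t))"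
    using Suc.IH by simp
  also have "\<dots> = D N * ((1 - X ^ Suc (N + t)) * D (Suc (N + t))) + X ^ (N + t + 1) * (D N * D (Suc (N + t)))"
    using D_Suc[of "N+t", symmetric] by (simp del: power_Suc)
  also have "\<dots> = (1 - X ^ Suc N) * (D (Suc N) * D (Suc N + t))"
  proof -
    have "D N * ((1 - X ^ Suc (N + t)) * D (Suc (N + t))) + X ^ (N + t + 1) * (D N * D (Suc (N + t)))
        = D N * D (Suc (N + t))" by (simp add: algebra_simps del: power_Suc)
    also have "\<dots> = ((1 - X ^ Suc N) * D (Suc N)) * D (Suc (N + t))" by (simp only: D_Suc)
    also have "\<dots> = (1 - X ^ Suc N) * (D (Suc N) * D (Suc N + t))" by (simp add: mult_ac del: power_Suc)
    finally show ?thesis .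
  qed
  finally have eq: "(1 - X ^ Suc N) * (\<Sum>j\<le>Suc N. T (Suc N) t j) = (1 - X ^ Suc N) * (D (Suc N) * D (Suc N + t))" .
  have nz: "(1 - X ^ Suc N) \<noteq> 0"
  proof
    assume "(1 - X ^ Suc N) = 0"
    then have "fps_nth (1 - X ^ Suc N) 0 = 0" by simp
    then show False by simp
  qed
  show ?case using eq nz by simp
qed


definition c :: "nat \<Rightarrow> rat fps" where
  "c r = (1 - X ^ Suc r)^3 * (1 + X ^ Suc r) * D 1"

definition w :: "nat \<Rightarrow> nat \<Rightarrow> rat fps" where
  "w n r = 1 - 2 * X ^ (r+1) + X ^ (2*r+1) - X ^ (n+r+1) + X ^ (n+r+2)"

definition U :: "nat \<Rightarrow> nat \<Rightarrow> rat fps" where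
  "U n r = X ^ (r^2) * w n r * D 1 * D (n - r) * D (n + r + 1)"

lemma poly_id:
  fixes x y z :: "'a::comm_ring_1"
  shows "(1 - 2*(x*y) + x*y*y - x*y*y*z + x*x*y*y*z) * (1 - x*x*y*y*z)
     - (x*y*y) * (1 - 2*(x*x*y) + x*x*x*y*y - x*x*y*y*z + x*x*x*y*y*z) * (1 - z)
     = (1 - x*y)^3 * (1 + x*y)"
proof -
  have "(1 - 2*(x*y) + x*y*y - x*y*y*z + x*x*y*y*z) * (1 - x*x*y*y*z)
     - (x*y*y) * (1 - 2*(x*x*y) + x*x*x*y*y - x*x*y*y*z + x*x*x*y*y*z) * (1 - z)
     = (1 - x*y)*(1 - x*y)*(1 - x*y) * (1 + x*y)"
    by (simp add: algebra_simps)
  then show ?thesis by (simp add: power3_eq_cube)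
qed

lemma U0: "U n 0 = D n * D n"
proof -
  have "w n 0 = (1 - X) * (1 - X ^ Suc n)"
    by (simp add: w_def algebra_simps power_add)
  then have "U n 0 = ((1 - X) * D 1) * ((1 - X ^ Suc n) * D (Suc n)) * D n"
    by (simp add: U_def mult_ac del: power_Suc)
  then show ?thesis by (simp only: D_1 D_Suc) simp
qed

lemma wnn_gen:
  fixes x :: "'a::comm_ring_1"
  shows "(1 - 2 * x ^ (n+1) + x ^ (2*n+1) - x ^ (n+n+1) + x ^ (n+n+2)) * (1 - x ^ (n+n+2))
       = (1 - x ^ Suc n)^3 * (1 + x ^ Suc n)"
proof -
  define y where "y = x ^ n"
  have p: "x ^ (n+1) = x*y" "x ^ (2*n+1) = x*y*y" "x ^ (n+n+1) = x*y*y" "x ^ (n+n+2) = x*x*y*y"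
     "x ^ Suc n = x*y"
    by (simp_all add: y_def power_add mult_2 mult_ac eval_nat_numeral)
  show ?thesis unfolding p power3_eq_cube by (simp add: algebra_simps)
qed

lemma Ulast: "U n n = X ^ (n^2) * c n * D (n - n) * D (n + n + 2)"
proof -
  have d: "D (n + n + 1) = (1 - X ^ (n+n+2)) * D (n + n + 2)"
  proof -
    have e: "Suc (n+n+1) = n+n+2" by simp
    have "(1 - X ^ Suc (n+n+1)) * D (Suc (n+n+1)) = D (n+n+1)" by (rule D_Suc)
    then show ?thesis by (simp only: e)
  qed
  have "U n n = X ^ (n^2) * w n n * D 1 * D 0 * ((1 - X ^ (n+n+2)) * D (n + n + 2))"
    by (simp only: U_def d diff_self_eq_0)
  also have "\<dots> = X ^ (n^2) * (w n n * (1 - X ^ (n+n+2))) * D 1 * D 0 * D (n + n + 2)"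
    by (simp only: mult_ac)
  also have "w n n * (1 - X ^ (n+n+2)) = (1 - X ^ Suc n)^3 * (1 + X ^ Suc n)"
    unfolding w_def by (rule wnn_gen)
  finally show ?thesis by (simp only: c_def mult_ac diff_self_eq_0)
qed

lemma ustep_gen:
  fixes x :: "'a::comm_ring_1"
  assumes n: "n = r + Suc a"
  shows "(1 - 2 * x ^ (r+1) + x ^ (2*r+1) - x ^ (n+r+1) + x ^ (n+r+2)) * (1 - x ^ (n+r+2))
     - x ^ (2*r+1) * (1 - 2 * x ^ (Suc r+1) + x ^ (2*Suc r+1) - x ^ (n+Suc r+1) + x ^ (n+Suc r+2))
       * (1 - x ^ Suc a)
     = (1 - x ^ Suc r)^3 * (1 + x ^ Suc r)"
proof -
  define y where "y = x ^ r"
  define z where "z = x ^ Suc a"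
  have p: "x ^ (r+1) = x*y" "x ^ (2*r+1) = x*y*y" "x ^ (n+r+1) = x*y*y*z" "x ^ (n+r+2) = x*x*y*y*z"
    "x ^ (Suc r+1) = x*x*y" "x ^ (2*Suc r+1) = x*x*x*y*y" "x ^ (n+Suc r+1) = x*x*y*y*z"
    "x ^ (n+Suc r+2) = x*x*x*y*y*z" "x ^ Suc r = x*y"
    by (simp_all add: y_def z_def n power_add mult_2 mult_ac eval_nat_numeral)
  show ?thesis unfolding p z_def[symmetric] by (rule poly_id)
qed

lemma fact_gen:
  fixes A B C E F G H I :: "'a::comm_ring_1"
  shows "A*B*C*E*(F*G) - (A*H)*I*C*(J*E)*G = A*(B*F - H*I*J)*C*E*G"
  by (simp add: algebra_simps)

lemma Ustep:
  assumes "r < n"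
  shows "U n r - U n (Suc r) = X ^ (r^2) * c r * D (n - r) * D (n + r + 2)"
proof -
  obtain a where a: "n - r = Suc a" using assms by (metis Suc_diff_Suc)
  have n: "n = r + Suc a" using a assms by simp
  have d1: "D (n + r + 1) = (1 - X ^ (n+r+2)) * D (n + r + 2)"
  proof -
    have e: "Suc (n+r+1) = n+r+2" by simp
    have "(1 - X ^ Suc (n+r+1)) * D (Suc (n+r+1)) = D (n+r+1)" by (rule D_Suc)
    then show ?thesis by (simp only: e)
  qed
  have d2: "D (n - Suc r) = (1 - X ^ Suc a) * D (n - r)"
  proof -
    have "n - Suc r = a" using a by simp
    then show ?thesis using D_Suc[of a] a by simp
  qed
  have d3: "n + Suc r + 1 = n + r + 2" by simp
  have e2: "X ^ (Suc r ^ 2) = X ^ (r^2) * X ^ (2*r+1)"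
    by (simp add: power_add[symmetric] power2_eq_square)
  have "U n r - U n (Suc r) = X ^ (r^2) * w n r * D 1 * D (n - r) * ((1 - X ^ (n+r+2)) * D (n + r + 2))
     - (X ^ (r^2) * X ^ (2*r+1)) * w n (Suc r) * D 1 * ((1 - X ^ Suc a) * D (n - r)) * D (n + r + 2)"
    by (simp only: U_def d1 d2 d3 e2)
  also have "\<dots> = X ^ (r^2) * (w n r * (1 - X ^ (n+r+2)) - X ^ (2*r+1) * w n (Suc r) * (1 - X ^ Suc a))
       * D 1 * D (n - r) * D (n + r + 2)"
    by (rule fact_gen)
  also have "w n r * (1 - X ^ (n+r+2)) - X ^ (2*r+1) * w n (Suc r) * (1 - X ^ Suc a)
      = (1 - X ^ Suc r)^3 * (1 + X ^ Suc r)"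
    unfolding w_def by (rule ustep_gen[OF n])
  finally show ?thesis by (simp only: c_def mult_ac)
qed

lemma PI: "(\<Sum>r\<le>n. X ^ (r^2) * c r * D (n - r) * D (n + r + 2)) = D n * D n"
proof -
  have "(\<Sum>r<n. X ^ (r^2) * c r * D (n - r) * D (n + r + 2)) = (\<Sum>r<n. U n r - U n (Suc r))"
    by (intro sum.cong refl) (simp add: Ustep)
  also have "\<dots> = U n 0 - U n n"
    by (rule sum_lessThan_telescope')
  finally have "(\<Sum>r<n. X ^ (r^2) * c r * D (n - r) * D (n + r + 2)) = U n 0 - U n n" .
  then show ?thesis
    by (simp only: lessThan_Suc_atMost[symmetric] sum.lessThan_Suc Ulast[symmetric] U0) simp
qed


lemma prod_qpoch_nth0: "fps_nth (\<Prod>j\<in>A. qpoch (f j)) 0 = 1"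
proof (cases "finite A")
  case True
  then show ?thesis by (induction A rule: finite_induct) (simp_all add: fps_mult_nth_0)
qed simp

lemma div_unit1: "fps_nth g 0 = (1::rat) \<Longrightarrow> f / g = f * inverse g"
  by (rule fps_divide_unit) simp

lemma lhs_term_eq: "lhs_term m i = X ^ (m * (i^2 + 2*i) - 2*i) * c i"
proof -
  have "fps_nth (1 - X) 0 = (1::rat)" by simp
  then have "(1 - X ^ (i+1))^3 * (1 + X ^ (i+1)) / (1 - X) = (1 - X ^ (i+1))^3 * (1 + X ^ (i+1)) * D 1"
    by (simp add: div_unit1 D_def qpoch_def)
  then show ?thesis by (simp add: lhs_term_def c_def mult_ac)
qed

lemma lhs_term_Suc: "m \<ge> 1 \<Longrightarrow> lhs_term (Suc m) r = X ^ (r^2 + 2*r) * lhs_term m r"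
proof -
  assume m: "m \<ge> 1"
  define s where "s = r^2 + 2*r"
  have h1: "m * s \<ge> 1 * s" using m by (intro mult_le_mono1)
  have h2: "2*r \<le> s" by (simp add: s_def)
  have "Suc m * s - 2*r = s + (m * s - 2*r)" using h1 h2 by (simp only: mult_Suc mult_1)
  then have e: "Suc m * (r^2 + 2*r) - 2*r = (r^2 + 2*r) + (m * (r^2 + 2*r) - 2*r)" by (simp add: s_def)
  show ?thesis unfolding lhs_term_eq e power_add by (simp only: mult_ac)
qed

lemma lhs_term_1: "lhs_term (Suc 0) r = X ^ (r^2) * c r"
  by (simp add: lhs_term_eq)

lemma rhs_term_single: "rhs_term [k] = X ^ (k^2) * D k * D k"
proof -
  have "rhs_term [k] = X ^ (k^2 + 2*k - 2*k) / (qpoch k)^2"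
    by (simp add: rhs_term_def)
  also have "\<dots> = X ^ (k^2) * inverse ((qpoch k)^2)"
    by (subst div_unit1) (simp_all add: fps_mult_nth_0 power2_eq_square)
  finally show ?thesis by (simp add: D_def power2_eq_square fps_inverse_mult mult_ac)
qed

lemma rhs_term_Cons:
  assumes "ks \<noteq> []"
  shows "rhs_term (k # ks) = X ^ (k^2 + 2*k) * D (k - hd ks) * rhs_term ks"
proof -
  define L where "L = length ks"
  have L: "L = Suc (L - 1)" using assms by (simp add: L_def)
  define f where "f = (\<lambda>x::nat. x^2 + 2*x)"
  define E where "E = (\<Sum>j<L. f (ks!j))"
  define Q where "Q = (qpoch (last ks))^2"
  define P where "P = (\<Prod>j<L - 1. qpoch (ks!j - ks!(j+1)))"
  have sumeq: "(\<Sum>j<length (k#ks). f ((k#ks)!j)) = f k + E"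
    unfolding E_def L_def by (simp only: length_Cons sum.lessThan_Suc_shift nth_Cons_0 nth_Cons_Suc)
  have prodeq: "(\<Prod>j<length (k#ks) - 1. qpoch ((k#ks)!j - (k#ks)!(j+1))) = qpoch (k - hd ks) * P"
  proof -
    have "(\<Prod>j<length (k#ks) - 1. qpoch ((k#ks)!j - (k#ks)!(j+1))) = (\<Prod>j<Suc (L - 1). qpoch ((k#ks)!j - (k#ks)!(j+1)))"
      using L by (simp add: L_def)
    also have "\<dots> = qpoch (k - ks!0) * P"
      by (simp only: prod.lessThan_Suc_shift) (simp add: P_def)
    finally show ?thesis using assms by (simp add: hd_conv_nth)
  qed
  have lastle: "2 * last ks \<le> E"
  proof -
    have "last ks = ks ! (L - 1)" using assms by (simp add: L_def last_conv_nth)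
    moreover have "f (ks ! (L-1)) \<le> E"
      unfolding E_def by (rule member_le_sum) (use L in auto)
    ultimately show ?thesis by (simp add: f_def)
  qed
  have r1: "rhs_term ks = X ^ (E - 2 * last ks) * inverse (Q * P)"
    unfolding rhs_term_def E_def f_def Q_def P_def L_def
    by (rule div_unit1) (simp add: fps_mult_nth_0 prod_qpoch_nth0 power2_eq_square)
  have "rhs_term (k # ks) = X ^ (f k + E - 2 * last ks) / (Q * (qpoch (k - hd ks) * P))"
    unfolding rhs_term_def using sumeq prodeq assms by (simp add: f_def Q_def)
  also have "\<dots> = X ^ (f k + E - 2 * last ks) * inverse (Q * (qpoch (k - hd ks) * P))"
    by (rule div_unit1) (simp add: fps_mult_nth_0 prod_qpoch_nth0 P_def Q_def power2_eq_square)
  also have "f k + E - 2 * last ks = f k + (E - 2 * last ks)" using lastle by simp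
  finally show ?thesis
    by (simp add: r1 f_def D_def power_add fps_inverse_mult mult_ac)
qed

definition S :: "nat \<Rightarrow> nat \<Rightarrow> nat list set" where
  "S m n = {ks. length ks = m \<and> sorted_wrt (\<ge>) ks \<and> (\<forall>x\<in>set ks. x \<le> n)}"

lemma finite_S: "finite (S m n)"
proof -
  have "S m n \<subseteq> {xs. set xs \<subseteq> {..n} \<and> length xs = m}" by (auto simp: S_def)
  moreover have "finite {xs. set xs \<subseteq> {..n} \<and> length xs = m}"
    by (rule finite_lists_length_eq) simp
  ultimately show ?thesis by (rule finite_subset)
qed

definition A :: "nat \<Rightarrow> nat \<Rightarrow> rat fps" where
  "A m n = (\<Sum>ks\<in>S m n. rhs_term ks * D (n - hd ks))"

lemma S_1: "S 1 n = (\<lambda>k. [k]) ` {..n}"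
  by (auto simp: S_def length_Suc_conv)

lemma A_1: "A 1 n = D n * D n"
proof -
  have "A 1 n = (\<Sum>k\<le>n. rhs_term [k] * D (n - k))"
    unfolding A_def S_1 by (subst sum.reindex) (auto simp: inj_on_def)
  also have "\<dots> = (\<Sum>k\<le>n. T n 0 k)"
    by (intro sum.cong refl) (simp add: rhs_term_single T_def mult_ac)
  also have "\<dots> = D n * D n" using KI[of n 0] by simp
  finally show ?thesis .
qed

lemma S_Suc: "m \<ge> 1 \<Longrightarrow> S (Suc m) n = (\<lambda>(k,ks). k # ks) ` (SIGMA k:{..n}. S m k)"
  by (auto simp: S_def length_Suc_conv image_iff intro: order_trans)

lemma A_Suc:
  assumes "m \<ge> 1"
  shows "A (Suc m) n = (\<Sum>k\<le>n. X ^ (k^2 + 2*k) * D (n - k) * A m k)"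
proof -
  have "A (Suc m) n = (\<Sum>(k,ks)\<in>(SIGMA k:{..n}. S m k). rhs_term (k # ks) * D (n - k))"
    unfolding A_def S_Suc[OF assms] by (subst sum.reindex) (auto simp: inj_on_def split_beta intro!: sum.cong)
  also have "\<dots> = (\<Sum>k\<le>n. \<Sum>ks\<in>S m k. rhs_term (k # ks) * D (n - k))"
    by (rule sum.Sigma[symmetric]) (auto simp: finite_S)
  also have "\<dots> = (\<Sum>k\<le>n. X ^ (k^2 + 2*k) * D (n - k) * A m k)"
  proof (intro sum.cong refl)
    fix k assume "k \<in> {..n}"
    have "\<And>ks. ks \<in> S m k \<Longrightarrow> ks \<noteq> []" using assms by (auto simp: S_def)
    then show "(\<Sum>ks\<in>S m k. rhs_term (k # ks) * D (n - k)) = X ^ (k^2 + 2*k) * D (n - k) * A m k"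
      unfolding A_def sum_distrib_left
      by (intro sum.cong refl) (simp add: rhs_term_Cons mult_ac)
  qed
  finally show ?thesis .
qed

lemma Bailey:
  assumes "m \<ge> 1"
  shows "A m n = (\<Sum>r\<le>n. lhs_term m r * D (n - r) * D (n + r + 2))"
  using assms
proof (induction m arbitrary: n rule: nat_induct_at_least)
  case base
  have "A 1 n = (\<Sum>r\<le>n. X ^ (r^2) * c r * D (n - r) * D (n + r + 2))"
    by (simp only: A_1 PI)
  also have "\<dots> = (\<Sum>r\<le>n. lhs_term 1 r * D (n - r) * D (n + r + 2))"
    by (simp only: One_nat_def lhs_term_1)
  finally show ?case .
next
  case (Suc m)
  define G where "G = (\<lambda>k r. X ^ (k^2 + 2*k) * D (n - k) * (lhs_term m r * D (k - r) * D (k + r + 2)))"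
  have "A (Suc m) n = (\<Sum>k\<le>n. X ^ (k^2 + 2*k) * D (n - k) * (\<Sum>r\<le>k. lhs_term m r * D (k - r) * D (k + r + 2)))"
    by (simp only: A_Suc[OF Suc.hyps] Suc.IH)
  also have "\<dots> = (\<Sum>k\<le>n. \<Sum>r\<le>k. G k r)"
    by (simp only: G_def sum_distrib_left)
  also have "\<dots> = (\<Sum>k\<in>{..n}. \<Sum>r\<in>{r\<in>{..n}. r \<le> k}. G k r)"
  proof (intro sum.cong refl)
    fix k assume "k \<in> {..n}"
    then show "{..k} = {r\<in>{..n}. r \<le> k}" by auto
  qed
  also have "\<dots> = (\<Sum>r\<in>{..n}. \<Sum>k\<in>{k\<in>{..n}. r \<le> k}. G k r)"
    by (rule sum.swap_restrict) auto
  also have "\<dots> = (\<Sum>r\<le>n. lhs_term (Suc m) r * D (n - r) * D (n + r + 2))"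
  proof (intro sum.cong refl)
    fix r assume r: "r \<in> {..n}"
    have set: "{k\<in>{..n}. r \<le> k} = {r..n}" by auto
    have rn: "r \<le> n" using r by simp
    have "(\<Sum>k\<in>{k\<in>{..n}. r \<le> k}. G k r) = (\<Sum>j\<in>{0..n-r}. G (r + j) r)"
      unfolding set sum.atLeastAtMost_shift_0[OF rn] by (simp only: comp_def)
    also have "\<dots> = (\<Sum>j\<le>n-r. lhs_term m r * X ^ (r^2 + 2*r) * T (n - r) (2*r+2) j)"
    proof (intro sum.cong)
      fix j assume j: "j \<in> {..n-r}"
      have e: "(r+j)^2 + 2*(r+j) = (r^2 + 2*r) + (j^2 + (2*r+2)*j)"
        by (simp add: power2_eq_square algebra_simps)
      have d: "n - (r+j) = n - r - j" "r + j - r = j" "r + j + r + 2 = 2*r+2+j" by auto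
      show "G (r + j) r = lhs_term m r * X ^ (r^2 + 2*r) * T (n - r) (2*r+2) j"
      proof -
        have e': "X ^ ((r+j)^2 + 2*(r+j)) = X ^ (r^2 + 2*r) * X ^ (j^2 + (2*r+2)*j)"
          by (simp only: e power_add)
        show ?thesis unfolding G_def T_def d e' by (simp only: mult_ac)
      qed
    qed (simp only: atLeast0AtMost)
    also have "\<dots> = lhs_term m r * X ^ (r^2 + 2*r) * (D (n - r) * D (n - r + (2*r+2)))"
      by (simp only: sum_distrib_left[symmetric] KI)
    also have "n - r + (2*r+2) = n + r + 2" using rn by simp
    also have "lhs_term m r * X ^ (r^2 + 2*r) = lhs_term (Suc m) r"
      by (simp only: lhs_term_Suc[OF Suc.hyps] mult.commute)
    finally show "(\<Sum>k\<in>{k\<in>{..n}. r \<le> k}. G k r) = lhs_term (Suc m) r * D (n - r) * D (n + r + 2)"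
      by (simp only: mult.assoc)
  qed
  finally show ?case .
qed


definition Pq :: "rat fps" where "Pq = Abs_fps (\<lambda>d. fps_nth (qpoch d) d)"

lemma qpoch_Suc_nth: "d \<le> j \<Longrightarrow> fps_nth (qpoch (Suc j)) d = fps_nth (qpoch j) d"
  by (simp add: qpoch_Suc algebra_simps fps_X_power_mult_right_nth del: power_Suc)

lemma qpoch_stable: "d \<le> j \<Longrightarrow> fps_nth (qpoch j) d = fps_nth Pq d"
proof (induction j rule: dec_induct)
  case base
  then show ?case by (simp add: Pq_def)
next
  case (step j)
  then show ?case using qpoch_Suc_nth[of d j] by simp
qed

lemma qpoch_tendsto: "qpoch \<longlonglongrightarrow> Pq"
proof (rule tendsto_fpsI)
  fix d
  show "eventually (\<lambda>j. fps_nth (qpoch j) d = fps_nth Pq d) sequentially"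
    using eventually_ge_at_top[of d] by eventually_elim (rule qpoch_stable)
qed

lemma Pq_nth0: "fps_nth Pq 0 = 1"
  using qpoch_stable[of 0 0] by simp

definition DPq :: "rat fps" where "DPq = inverse Pq"

lemma DPq_Pq: "DPq * Pq = 1"
  unfolding DPq_def by (rule inverse_mult_eq_1) (simp add: Pq_nth0)

lemma cut_mult:
  assumes "fps_cutoff N a = fps_cutoff N a'" "fps_cutoff N b = fps_cutoff N b'"
  shows "fps_cutoff N (a * b) = fps_cutoff N (a' * b')"
proof -
  have "fps_nth (a * b) k = fps_nth (a' * b') k" if k: "k < N" for k
  proof -
    have "fps_nth (a * b) k = fps_nth (fps_cutoff N a * fps_cutoff N b) k"
      using k by (simp add: fps_cutoff_left_mult_nth fps_cutoff_right_mult_nth)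
    also have "\<dots> = fps_nth (a' * b') k"
      using k assms by (simp add: fps_cutoff_left_mult_nth fps_cutoff_right_mult_nth)
    finally show ?thesis .
  qed
  then show ?thesis by (simp add: fps_cutoff_eq_fps_cutoff_iff)
qed

lemma cut_inverse:
  fixes a a' :: "rat fps"
  assumes "fps_cutoff N a = fps_cutoff N a'" "fps_nth a 0 \<noteq> 0" "fps_nth a' 0 \<noteq> 0"
  shows "fps_cutoff N (inverse a) = fps_cutoff N (inverse a')"
  using fps_cutoff_inverse[OF assms(2), of N] fps_cutoff_inverse[OF assms(3), of N] assms(1) by simp

lemma cut_sum: "fps_cutoff N (sum f B) = (\<Sum>i\<in>B. fps_cutoff N (f i))"
  by (simp add: fps_eq_iff fps_sum_nth)

lemma cut_Xpow: "N \<le> e \<Longrightarrow> fps_cutoff N (X ^ e * u) = 0"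
  by (simp add: fps_eq_iff fps_X_power_mult_nth)

lemma cut_D: "N \<le> Suc j \<Longrightarrow> fps_cutoff N (D j) = fps_cutoff N DPq"
  unfolding D_def DPq_def
  by (rule cut_inverse) (auto simp: fps_cutoff_eq_fps_cutoff_iff qpoch_stable Pq_nth0)

lemma hd_max: "sorted_wrt (\<ge>) (ks :: nat list) \<Longrightarrow> x \<in> set ks \<Longrightarrow> x \<le> hd ks"
  by (cases ks) auto

lemma rhs_term_order:
  "ks \<noteq> [] \<Longrightarrow> sorted_wrt (\<ge>) ks \<Longrightarrow> \<exists>u. rhs_term ks = X ^ (hd ks ^ 2) * u"
proof (induction ks)
  case Nil
  then show ?case by simp
next
  case (Cons k ks)
  show ?case
  proof (cases "ks = []")
    case True
    then show ?thesis by (auto simp: rhs_term_single mult.assoc)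
  next
    case False
    with Cons obtain u where u: "rhs_term ks = X ^ (hd ks ^ 2) * u" by auto
    have "rhs_term (k # ks) = X ^ (k^2) * (X ^ (2*k) * D (k - hd ks) * X ^ (hd ks ^ 2) * u)"
      using False by (simp add: rhs_term_Cons u power_add mult_ac)
    then show ?thesis by auto
  qed
qed

lemma rhs_term_nth_zero:
  assumes "ks \<noteq> []" "sorted_wrt (\<ge>) ks" "d < hd ks"
  shows "fps_nth (rhs_term ks) d = 0"
proof -
  obtain u where u: "rhs_term ks = X ^ (hd ks ^ 2) * u" using rhs_term_order assms by blast
  have "hd ks \<le> hd ks ^ 2" by (simp add: power2_eq_square)
  then show ?thesis using assms(3) by (simp add: u fps_X_power_mult_nth)
qed

lemma rhs_term_cut:
  assumes "ks \<noteq> []" "sorted_wrt (\<ge>) ks" "N \<le> hd ks"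
  shows "fps_cutoff N (rhs_term ks * v) = 0"
proof -
  obtain u where u: "rhs_term ks = X ^ (hd ks ^ 2) * u" using rhs_term_order assms by blast
  have "hd ks \<le> hd ks ^ 2" by (simp add: power2_eq_square)
  then show ?thesis unfolding u mult.assoc using assms(3) by (intro cut_Xpow) simp
qed

lemma lhs_term_order: "m \<ge> 1 \<Longrightarrow> \<exists>u. lhs_term m i = X ^ i * u"
proof -
  assume m: "m \<ge> 1"
  have h1: "m * (i^2 + 2*i) \<ge> 1 * (i^2 + 2*i)" using m by (intro mult_le_mono1)
  have h2: "i \<le> i^2" by (simp add: power2_eq_square le_square)
  have gen: "\<And>s q::nat. q + 2*i \<le> s \<Longrightarrow> i \<le> q \<Longrightarrow> s - 2*i = i + (s - 2*i - i)" by arith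
  have "m * (i^2 + 2*i) - 2*i = i + (m * (i^2 + 2*i) - 2*i - i)"
    by (rule gen[of "i^2"]) (use h1 h2 in simp_all)
  then have "lhs_term m i = X ^ i * (X ^ (m * (i^2 + 2*i) - 2*i - i) * c i)"
    unfolding lhs_term_eq by (metis power_add mult.assoc)
  then show ?thesis by blast
qed

lemma lhs_term_nth_zero: "m \<ge> 1 \<Longrightarrow> d < i \<Longrightarrow> fps_nth (lhs_term m i) d = 0"
  using lhs_term_order[of m i] by (auto simp: fps_X_power_mult_nth)

lemma lhs_term_cut: "m \<ge> 1 \<Longrightarrow> N \<le> i \<Longrightarrow> fps_cutoff N (lhs_term m i * v) = 0"
  using lhs_term_order[of m i] by (auto simp: mult.assoc intro!: cut_Xpow)

lemma has_sum_coeff: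
  fixes f :: "'i \<Rightarrow> rat fps"
  assumes fin: "\<And>d. finite (F d)" and sub: "\<And>d. F d \<subseteq> I"
    and z: "\<And>d i. i \<in> I \<Longrightarrow> i \<notin> F d \<Longrightarrow> fps_nth (f i) d = 0"
  shows "(f has_sum Abs_fps (\<lambda>d. \<Sum>i\<in>F d. fps_nth (f i) d)) I"
  unfolding has_sum_def
proof (rule tendsto_fpsI)
  fix d
  show "eventually (\<lambda>Y. fps_nth (sum f Y) d = fps_nth (Abs_fps (\<lambda>d. \<Sum>i\<in>F d. fps_nth (f i) d)) d)
          (finite_subsets_at_top I)"
    unfolding eventually_finite_subsets_at_top
  proof (intro exI conjI allI impI)
    show "finite (F d)" "F d \<subseteq> I" by (fact fin sub)+
    fix Y assume Y: "finite Y \<and> F d \<subseteq> Y \<and> Y \<subseteq> I"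
    have "fps_nth (sum f Y) d = (\<Sum>i\<in>Y. fps_nth (f i) d)" by (simp add: fps_sum_nth)
    also have "\<dots> = (\<Sum>i\<in>F d. fps_nth (f i) d)"
      using Y z by (intro sum.mono_neutral_right) auto
    finally show "fps_nth (sum f Y) d = fps_nth (Abs_fps (\<lambda>d. \<Sum>i\<in>F d. fps_nth (f i) d)) d" by simp
  qed
qed


theorem theorem4p3:
  fixes m :: nat
  assumes "m \<ge> 1"
  shows "\<exists>P R. qpoch \<longlonglongrightarrow> P
           \<and> (rhs_term has_sum R) (rhs_index m)
           \<and> (lhs_term m has_sum (P * R)) UNIV"
proof -
  have m: "m \<ge> 1" by (fact assms)
  have ne: "\<And>ks n. ks \<in> S m n \<Longrightarrow> ks \<noteq> [] \<and> sorted_wrt (\<ge>) ks" using m by (auto simp: S_def)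
  have notS: "\<And>ks d. length ks = m \<Longrightarrow> sorted_wrt (\<ge>) ks \<Longrightarrow> ks \<notin> S m d \<Longrightarrow> d < hd ks"
  proof -
    fix ks :: "nat list" and d assume a: "length ks = m" "sorted_wrt (\<ge>) ks" "ks \<notin> S m d"
    then obtain x where "x \<in> set ks" "d < x" by (auto simp: S_def not_le)
    then show "d < hd ks" using hd_max[OF a(2)] by (meson less_le_trans)
  qed
  define R where "R = Abs_fps (\<lambda>d. \<Sum>ks\<in>S m d. fps_nth (rhs_term ks) d)"
  define L where "L = Abs_fps (\<lambda>d. \<Sum>i\<in>{..d}. fps_nth (lhs_term m i) d)"
  have hR: "(rhs_term has_sum R) (rhs_index m)"
    unfolding R_def
  proof (rule has_sum_coeff)
    show "finite (S m d)" for d by (rule finite_S)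
    show "S m d \<subseteq> rhs_index m" for d by (auto simp: S_def rhs_index_def)
    fix d ks assume a: "ks \<in> rhs_index m" "ks \<notin> S m d"
    then have "ks \<noteq> []" "sorted_wrt (\<ge>) ks" "d < hd ks"
      using m notS[of ks d] by (auto simp: rhs_index_def)
    then show "fps_nth (rhs_term ks) d = 0" by (rule rhs_term_nth_zero)
  qed
  have hL: "(lhs_term m has_sum L) UNIV"
    unfolding L_def
    by (rule has_sum_coeff) (auto simp: not_le intro: lhs_term_nth_zero[OF m])
  have key: "L = Pq * R"
  proof (rule fps_ext)
    fix d
    define N where "N = Suc d"
    define n where "n = 2 * N"
    define RN where "RN = (\<Sum>ks\<in>S m d. rhs_term ks)"
    define LN where "LN = (\<Sum>i\<le>d. lhs_term m i)"
    have Ssub: "S m k \<subseteq> S m d" if "k \<le> d" for k using that by (auto simp: S_def)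
    have a: "fps_cutoff N R = fps_cutoff N RN"
      unfolding fps_cutoff_eq_fps_cutoff_iff
    proof (intro allI impI)
      fix k assume k: "k < N"
      have "fps_nth R k = (\<Sum>ks\<in>S m k. fps_nth (rhs_term ks) k)" by (simp add: R_def)
      also have "\<dots> = (\<Sum>ks\<in>S m d. fps_nth (rhs_term ks) k)"
      proof (rule sum.mono_neutral_left[OF finite_S Ssub])
        show "k \<le> d" using k by (simp add: N_def)
        show "\<forall>ks\<in>S m d - S m k. fps_nth (rhs_term ks) k = 0"
        proof
          fix ks assume ks: "ks \<in> S m d - S m k"
          then have "ks \<noteq> []" "sorted_wrt (\<ge>) ks" using ne by auto
          moreover have "k < hd ks" using ks notS[of ks k] by (auto simp: S_def)
          ultimately show "fps_nth (rhs_term ks) k = 0" by (rule rhs_term_nth_zero)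
        qed
      qed
      also have "\<dots> = fps_nth RN k" by (simp add: RN_def fps_sum_nth)
      finally show "fps_nth R k = fps_nth RN k" .
    qed
    have a': "fps_cutoff N L = fps_cutoff N LN"
      unfolding fps_cutoff_eq_fps_cutoff_iff
    proof (intro allI impI)
      fix k assume k: "k < N"
      have "fps_nth L k = (\<Sum>i\<in>{..k}. fps_nth (lhs_term m i) k)" by (simp add: L_def)
      also have "\<dots> = (\<Sum>i\<in>{..d}. fps_nth (lhs_term m i) k)"
        using k by (intro sum.mono_neutral_left) (auto simp: N_def intro: lhs_term_nth_zero[OF m])
      also have "\<dots> = fps_nth LN k" by (simp add: LN_def fps_sum_nth)
      finally show "fps_nth L k = fps_nth LN k" .
    qed
    have b: "fps_cutoff N (A m n) = fps_cutoff N (RN * DPq)"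
    proof -
      have "fps_cutoff N (A m n) = (\<Sum>ks\<in>S m n. fps_cutoff N (rhs_term ks * D (n - hd ks)))"
        by (simp add: A_def cut_sum)
      also have "\<dots> = (\<Sum>ks\<in>S m d. fps_cutoff N (rhs_term ks * D (n - hd ks)))"
      proof (rule sum.mono_neutral_right[OF finite_S])
        show "S m d \<subseteq> S m n" by (auto simp: S_def n_def N_def)
        show "\<forall>ks\<in>S m n - S m d. fps_cutoff N (rhs_term ks * D (n - hd ks)) = 0"
        proof
          fix ks assume ks: "ks \<in> S m n - S m d"
          then have "ks \<noteq> []" "sorted_wrt (\<ge>) ks" using ne by auto
          moreover have "N \<le> hd ks" using ks notS[of ks d] by (auto simp: S_def N_def)
          ultimately show "fps_cutoff N (rhs_term ks * D (n - hd ks)) = 0" by (rule rhs_term_cut)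
        qed
      qed
      also have "\<dots> = (\<Sum>ks\<in>S m d. fps_cutoff N (rhs_term ks * DPq))"
      proof (intro sum.cong refl cut_mult)
        fix ks assume ks: "ks \<in> S m d"
        then have "hd ks \<le> d" using ne[OF ks] by (auto simp: S_def)
        then show "fps_cutoff N (D (n - hd ks)) = fps_cutoff N DPq"
          by (intro cut_D) (simp add: n_def N_def)
      qed
      also have "\<dots> = fps_cutoff N (RN * DPq)"
        by (simp add: RN_def sum_distrib_right cut_sum)
      finally show ?thesis .
    qed
    have c: "fps_cutoff N (\<Sum>r\<le>n. lhs_term m r * D (n - r) * D (n + r + 2)) = fps_cutoff N (LN * DPq * DPq)"
    proof -
      have "fps_cutoff N (\<Sum>r\<le>n. lhs_term m r * D (n - r) * D (n + r + 2))
          = (\<Sum>r\<le>n. fps_cutoff N (lhs_term m r * (D (n - r) * D (n + r + 2))))"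
        by (simp add: cut_sum mult.assoc)
      also have "\<dots> = (\<Sum>r\<le>d. fps_cutoff N (lhs_term m r * (D (n - r) * D (n + r + 2))))"
        by (rule sum.mono_neutral_right) (auto simp: n_def N_def not_le intro: lhs_term_cut[OF m])
      also have "\<dots> = (\<Sum>r\<le>d. fps_cutoff N (lhs_term m r * (DPq * DPq)))"
      proof (intro sum.cong refl)
        fix r assume r: "r \<in> {..d}"
        show "fps_cutoff N (lhs_term m r * (D (n - r) * D (n + r + 2))) = fps_cutoff N (lhs_term m r * (DPq * DPq))"
          using r by (intro cut_mult refl cut_D) (auto simp: n_def N_def)
      qed
      also have "\<dots> = fps_cutoff N (LN * DPq * DPq)"
        by (simp add: LN_def sum_distrib_right cut_sum mult.assoc)
      finally show ?thesis .
    qed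
    have "fps_cutoff N (RN * DPq) = fps_cutoff N (LN * DPq * DPq)"
      using b c Bailey[OF m, of n] by simp
    then have "fps_cutoff N ((RN * DPq) * (Pq * Pq)) = fps_cutoff N ((LN * DPq * DPq) * (Pq * Pq))"
      by (rule cut_mult) simp
    moreover have "(RN * DPq) * (Pq * Pq) = Pq * RN"
      using DPq_Pq by (simp add: algebra_simps)
    moreover have "(LN * DPq * DPq) * (Pq * Pq) = LN"
    proof -
      have "(LN * DPq * DPq) * (Pq * Pq) = LN * (DPq * Pq) * (DPq * Pq)" by (simp only: mult_ac)
      then show ?thesis using DPq_Pq by simp
    qed
    ultimately have e: "fps_cutoff N (Pq * RN) = fps_cutoff N LN" by simp
    have "fps_cutoff N (Pq * R) = fps_cutoff N (Pq * RN)"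
      by (rule cut_mult) (simp_all add: a)
    then have "fps_cutoff N L = fps_cutoff N (Pq * R)" using a' e by simp
    then show "fps_nth L d = fps_nth (Pq * R) d"
      unfolding fps_cutoff_eq_fps_cutoff_iff N_def by simp
  qed
  show ?thesis
    using qpoch_tendsto hR hL unfolding key by blast
qed

end
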